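(* Fix $p>1$ and an integer $N\ge0$. Let $Q$ be a standard square with double square $\widetilde Q$, and let $\widetilde\Lambda\subset\mathbb C$ be such that $E^N\colon\widetilde\Lambda\to\widetilde Q$ is a conformal isomorphism with $|(E^N)'|>2$ on $\widetilde\Lambda$. Set $\Lambda:=(E^N)^{-1}(Q)\cap\widetilde\Lambda$ and let $M>0$ with $\Lambda\subset D_M(0)$. Then there is $\xi_*>0$ depending only on $p$ and $M$ such that for all $\xi\ge\xi_*$, $\dim_H(I^N_{p,\xi,\Lambda})\le 1+1/p$.
   Context: For $\kappa\in\mathbb C$ let $E_\kappa(z)=e^z+\kappa$ and $E^n(\kappa):=E_\kappa^{\circ n}(\kappa)$, an entire function of $\kappa$ with derivative $(E^n)'$ with respect to $\kappa$. $I:=\{\kappa\colon E^n(\kappa)\to\infty\}$. $D_r(z)$ is the open disk of radius $r$ about $z$. A standard square is an open square of side length $\pi/2$ with sides parallel to the axes; its double square is the concentric open square with parallel sides of side length $\pi$. For $p>1,\xi\ge0$: $P_{p,\xi}:=\{x+iy\colon x>\xi,\ |y|<x^{1/p}\}$. For an open set $\Lambda$: $I_{p,\Lambda}:=\{\kappa\in\Lambda\cap I\colon |(E^n)'(\kappa)|\to\infty \text{ and } E^n(\kappa)\in P_{p,0} \text{ for all sufficiently large } n\}$, and $I^N_{p,\xi,\Lambda}:=\{\kappa\in I_{p,\Lambda}\colon E^n(\kappa)\in P_{p,\xi}\text{ for all } n\ge N\}$. *)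

theory Defs
  imports "HOL-Analysis.Analysis"
begin

definition Eiter :: "nat \<Rightarrow> complex \<Rightarrow> complex" where
  "Eiter n \<kappa> = ((\<lambda>z. exp z + \<kappa>) ^^ n) \<kappa>"

definition escaping :: "complex set" where
  "escaping = {\<kappa>. filterlim (\<lambda>n. Eiter n \<kappa>) at_infinity sequentially}"

definition open_square :: "complex \<Rightarrow> real \<Rightarrow> complex set" where
  "open_square c r = {z. \<bar>Re z - Re c\<bar> < r \<and> \<bar>Im z - Im c\<bar> < r}"

definition Pset :: "real \<Rightarrow> real \<Rightarrow> complex set" where
  "Pset p \<xi> = {z. Re z > \<xi> \<and> \<bar>Im z\<bar> < Re z powr (1 / p)}"

definition I_p :: "real \<Rightarrow> complex set \<Rightarrow> complex set" where
  "I_p p \<Lambda> = {\<kappa> \<in> \<Lambda> \<inter> escaping.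
      filterlim (\<lambda>n. norm (deriv (Eiter n) \<kappa>)) at_top sequentially \<and>
      (\<forall>\<^sub>F n in sequentially. Eiter n \<kappa> \<in> Pset p 0)}"

definition I_pN :: "real \<Rightarrow> nat \<Rightarrow> real \<Rightarrow> complex set \<Rightarrow> complex set" where
  "I_pN p N \<xi> \<Lambda> = {\<kappa> \<in> I_p p \<Lambda>. \<forall>n\<ge>N. Eiter n \<kappa> \<in> Pset p \<xi>}"

text \<open>Hausdorff measure and dimension (in a metric space), via countable covers by
  bounded sets of diameter at most delta; conventions diam(empty)^s = 0 and
  diam(U)^0 = 1 for nonempty U.\<close>
definition diam_pow :: "real \<Rightarrow> 'a::metric_space set \<Rightarrow> ennreal" where
  "diam_pow s U = (if U = {} then 0 else if s = 0 then 1 else ennreal (diameter U powr s))"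

definition hausdorff_content :: "real \<Rightarrow> real \<Rightarrow> 'a::metric_space set \<Rightarrow> ennreal" where
  "hausdorff_content s \<delta> A = Inf {(\<Sum>i. diam_pow s (U i)) | U :: nat \<Rightarrow> 'a set.
      A \<subseteq> (\<Union>i. U i) \<and> (\<forall>i. bounded (U i) \<and> diameter (U i) \<le> \<delta>)}"

definition hausdorff_measure :: "real \<Rightarrow> 'a::metric_space set \<Rightarrow> ennreal" where
  "hausdorff_measure s A = Sup {hausdorff_content s \<delta> A | \<delta>. \<delta> > 0}"

definition hausdorff_dim :: "'a::metric_space set \<Rightarrow> real" where
  "hausdorff_dim A = Inf {s. s \<ge> 0 \<and> hausdorff_measure s A = 0}"

end

theory Submission
  imports Defs
begin


lemma Eiter_0[simp]: "Eiter 0 k = k" by (simp add: Eiter_def)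
lemma Eiter_Suc: "Eiter (Suc n) k = exp (Eiter n k) + k" by (simp add: Eiter_def)

lemma Eiter_holo: "Eiter n holomorphic_on UNIV"
proof (induction n)
  case 0 then show ?case by (simp add: Eiter_def holomorphic_on_ident)
next
  case (Suc n)
  have "Eiter (Suc n) = (\<lambda>k. exp (Eiter n k) + k)" by (rule ext) (simp add: Eiter_Suc)
  then show ?case using Suc by (auto intro!: holomorphic_intros)
qed

lemma exp_lower:
  fixes d :: complex assumes "norm d \<le> 1/4"
  shows "norm d / 4 \<le> norm (exp d - 1)"
proof -
  have t: "norm (exp d - (1 + d)) \<le> exp (norm d) * (norm d ^ 2)"
    using Taylor_exp_field[of d 1] by (simp add: numeral_2_eq_2 power_Suc)
  have "exp (norm d) \<le> 1 + 2 * norm d" using exp_bound_lemma[of "norm d"] assms by simp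
  also have "\<dots> \<le> 3/2" using assms by simp
  finally have e: "exp (norm d) \<le> 3/2" .
  have "exp (norm d) * (norm d ^ 2) \<le> 3/2 * (norm d * (1/4))"
  proof (rule mult_mono)
    show "norm d ^ 2 \<le> norm d * (1/4)" unfolding power2_eq_square using assms by (intro mult_left_mono) auto
  qed (use e in auto)
  then have "norm (exp d - (1 + d)) \<le> 3/8 * norm d" using t by simp
  moreover have "norm d \<le> norm (exp d - 1) + norm (exp d - (1 + d))"
    using norm_triangle_ineq4[of "exp d - 1" "exp d - (1+d)"] by (simp add: algebra_simps)
  ultimately show ?thesis using norm_ge_zero[of d] by linarith
qed

lemma exp_diff_lower:
  fixes u v :: complex assumes "norm (u - v) \<le> 1/4"
  shows "exp (Re v) * norm (u - v) / 4 \<le> norm (exp u - exp v)"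
proof -
  have "exp u - exp v = exp v * (exp (u - v) - 1)" by (simp add: exp_diff algebra_simps)
  then have "norm (exp u - exp v) = exp (Re v) * norm (exp (u - v) - 1)" by (simp add: norm_mult)
  then show ?thesis using exp_lower[OF assms] by (simp add: mult_left_mono)
qed

lemma convex_open_square: "convex (open_square c r)"
  unfolding convex_def open_square_def
proof (clarsimp)
  fix x y :: complex and u v :: real
  assume h: "\<bar>Re x - Re c\<bar> < r" "\<bar>Im x - Im c\<bar> < r" "\<bar>Re y - Re c\<bar> < r" "\<bar>Im y - Im c\<bar> < r"
    "0 \<le> u" "0 \<le> v" "u + v = 1"
  have "\<bar>u * a + v * b - cc\<bar> < r" if "\<bar>a - cc\<bar> < r" "\<bar>b - cc\<bar> < r" for a b cc
  proof -
    have "u * (a - cc) + v * (b - cc) = u * a + v * b - (u + v) * cc" by (simp add: algebra_simps)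
    then have "u * a + v * b - cc = u * (a - cc) + v * (b - cc)" using h(7) by simp
    also have "\<bar>\<dots>\<bar> \<le> u * \<bar>a - cc\<bar> + v * \<bar>b - cc\<bar>" using h(5,6) by (simp add: abs_triangle_ineq[THEN order_trans] abs_mult)
    also have "\<dots> < r"
    proof (cases "u = 0")
      case True then show ?thesis using h(7) that by simp
    next
      case False
      then have "u * \<bar>a - cc\<bar> < u * r" using h(5) that by simp
      moreover have "v * \<bar>b - cc\<bar> \<le> v * r" using h(6) that by (simp add: mult_left_mono)
      ultimately show ?thesis using h(7) by (simp add: algebra_simps) (metis distrib_left mult_1_right add_less_le_mono)
    qed
    finally show ?thesis .
  qed
  then show "\<bar>u * Re x + v * Re y - Re c\<bar> < r \<and> \<bar>u * Im x + v * Im y - Im c\<bar> < r"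
    using h by auto
qed




locale psetup =
  fixes p M \<xi> :: real and N :: nat and c :: complex and Lt :: "complex set"
  assumes p: "p > 1" and M: "M > 0" and xi: "\<xi> \<ge> 4 * M + 20"
   and opn: "open Lt" and bij: "bij_betw (Eiter N) Lt (open_square c (pi/2))"
   and der: "\<forall>k\<in>Lt. norm (deriv (Eiter N) k) > 2"
   and sub: "(Eiter N -` open_square c (pi/4)) \<inter> Lt \<subseteq> ball 0 M"
begin

definition "Lam = (Eiter N -` open_square c (pi/4)) \<inter> Lt"

lemma sq_sub: "open_square c (pi/4) \<subseteq> open_square c (pi/2)"
proof
  fix x assume "x \<in> open_square c (pi/4)"
  then have "\<bar>Re x - Re c\<bar> < pi/4" "\<bar>Im x - Im c\<bar> < pi/4" unfolding open_square_def by auto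
  moreover have "pi/4 < pi/2" using pi_gt_zero by simp
  ultimately show "x \<in> open_square c (pi/2)" by (simp only: open_square_def mem_Collect_eq) linarith
qed

lemma lip0:
  assumes "k \<in> Lam" "k' \<in> Lam"
  shows "2 * norm (k - k') \<le> norm (Eiter N k - Eiter N k')"
proof -
  define Q2 where "Q2 = open_square c (pi/2)"
  define \<phi> where "\<phi> = inv_into Lt (Eiter N)"
  have inj: "inj_on (Eiter N) Lt" and img: "Eiter N ` Lt = Q2" using bij by (auto simp: bij_betw_def Q2_def)
  have gf: "\<And>x. x \<in> Lt \<Longrightarrow> \<phi> (Eiter N x) = x" unfolding \<phi>_def using inj by (simp add: inv_into_f_f)
  have D: "\<And>z. (Eiter N has_field_derivative deriv (Eiter N) z) (at z)"
    by (rule holomorphic_derivI[OF Eiter_holo open_UNIV UNIV_I])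
  have cont: "continuous_on Lt (Eiter N)"
    using holomorphic_on_imp_continuous_on[OF Eiter_holo] continuous_on_subset by blast
  have dphi: "(\<phi> has_field_derivative inverse (deriv (Eiter N) (\<phi> w))) (at w within Q2)"
    and nphi: "norm (inverse (deriv (Eiter N) (\<phi> w))) \<le> 1/2" if w: "w \<in> Q2" for w
  proof -
    have x: "\<phi> w \<in> Lt" "Eiter N (\<phi> w) = w" using w img unfolding \<phi>_def
      by (auto intro: inv_into_into f_inv_into_f)
    define d where "d = deriv (Eiter N) (\<phi> w)"
    have dn: "norm d > 2" using der x(1) by (auto simp: d_def)
    then have d0: "d \<noteq> 0" by auto
    have "(Eiter N has_derivative (*) d) (at (\<phi> w))" using D[of "\<phi> w"] by (simp add: has_field_derivative_def d_def)
    moreover have "(*) d \<circ> (*) (inverse d) = id" using d0 by (auto simp: fun_eq_iff)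
    ultimately have "(\<phi> has_derivative (*) (inverse d)) (at (Eiter N (\<phi> w)))"
      by (intro has_derivative_inverse_strong[OF opn x(1) cont gf]) auto
    then show "(\<phi> has_field_derivative inverse (deriv (Eiter N) (\<phi> w))) (at w within Q2)"
      using x(2) by (simp add: has_field_derivative_def d_def has_derivative_at_withinI)
    have "norm (inverse d) = 1 / norm d" by (simp add: norm_inverse divide_inverse)
    also have "\<dots> \<le> 1/2" using dn by (simp add: divide_simps)
    finally show "norm (inverse (deriv (Eiter N) (\<phi> w))) \<le> 1/2" by (simp add: d_def)
  qed
  have kk: "k \<in> Lt" "k' \<in> Lt" "Eiter N k \<in> Q2" "Eiter N k' \<in> Q2" using assms sq_sub by (auto simp: Lam_def Q2_def)
  have "norm (\<phi> (Eiter N k) - \<phi> (Eiter N k')) \<le> 1/2 * norm (Eiter N k - Eiter N k')"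
    by (rule field_differentiable_bound[OF _ dphi nphi kk(3,4)]) (simp add: Q2_def convex_open_square)
  then show ?thesis using gf kk by simp
qed

definition gr :: "complex \<Rightarrow> int \<times> int" where
  "gr z = (\<lfloor>8 * Re z\<rfloor>, \<lfloor>8 * Im z\<rfloor>)"

definition "Y = {k \<in> Lam. \<forall>j. Eiter (N + j) k \<in> Pset p \<xi>}"

lemma same_cell:
  assumes "gr u = gr v"
  shows "norm (u - v) \<le> 1/4" "of_int (fst (gr u)) / 8 \<le> Re v" "of_int (fst (gr u)) / 8 \<le> Re u"
    "Re u < of_int (fst (gr u)) / 8 + 1/8"
proof -
  have a: "\<lfloor>8 * Re u\<rfloor> = \<lfloor>8 * Re v\<rfloor>" "\<lfloor>8 * Im u\<rfloor> = \<lfloor>8 * Im v\<rfloor>" using assms by (auto simp: gr_def)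
  have r: "\<bar>Re u - Re v\<bar> < 1/8"
    using a(1) floor_correct[of "8 * Re u"] floor_correct[of "8 * Re v"] by linarith
  have i: "\<bar>Im u - Im v\<bar> < 1/8"
    using a(2) floor_correct[of "8 * Im u"] floor_correct[of "8 * Im v"] by linarith
  show "norm (u - v) \<le> 1/4" using cmod_le[of "u - v"] r i by simp
  show "of_int (fst (gr u)) / 8 \<le> Re v" "of_int (fst (gr u)) / 8 \<le> Re u"
    "Re u < of_int (fst (gr u)) / 8 + 1/8"
    using a(1) floor_correct[of "8 * Re u"] floor_correct[of "8 * Re v"] unfolding gr_def fst_conv
    by linarith+
qed

lemma Y_Lam: "k \<in> Y \<Longrightarrow> k \<in> Lam" by (simp add: Y_def)
lemma Lam_M: "k \<in> Lam \<Longrightarrow> norm k < M" using sub by (auto simp: Lam_def)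

lemma Y_P: assumes "k \<in> Y" shows "Re (Eiter (N + j) k) > \<xi>"
  "\<bar>Im (Eiter (N + j) k)\<bar> < Re (Eiter (N + j) k) powr (1/p)"
  using assms by (auto simp: Y_def Pset_def)

lemma Pset_norm: assumes "Re w > \<xi>" "\<bar>Im w\<bar> < Re w powr (1/p)"
  shows "norm w \<le> 2 * Re w"
proof -
  have "Re w \<ge> 1" using assms xi M by linarith
  then have "Re w powr (1/p) \<le> Re w powr 1" using p by (intro powr_mono) auto
  then have "\<bar>Im w\<bar> \<le> Re w" using assms \<open>Re w \<ge> 1\<close> by simp
  then show ?thesis using cmod_le[of w] \<open>Re w \<ge> 1\<close> by simp
qed

lemma exp_big: assumes "x \<ge> 4 * M + 20" shows "exp x \<ge> 2 * x + 2 + M"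
proof -
  have "(1 + x/2)^2 \<le> exp (x/2) ^ 2"
    using assms M by (intro power_mono) (auto intro: exp_ge_add_one_self order_trans)
  also have "\<dots> = exp x" by (simp add: power2_eq_square flip: exp_add)
  finally have "(1 + x/2)^2 \<le> exp x" .
  moreover have "(1 + x/2)^2 = 1 + x + x * (x/4)" by (simp add: power2_eq_square algebra_simps)
  moreover have "x * (x/4) \<ge> x * (M + 5)" using assms M by (intro mult_left_mono) auto
  moreover have "x * (M + 5) \<ge> x + 1 + M"
  proof -
    have "x * M \<ge> 1 * M" using assms M by (intro mult_right_mono) auto
    moreover have "x * (M + 5) = x * M + 5 * x" by (simp add: algebra_simps)
    ultimately show ?thesis using assms M by linarith
  qed
  ultimately show ?thesis by linarith
qed

lemma growth:
  assumes "k \<in> Y"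
  shows "norm (Eiter (N + Suc j) k) \<le> exp (Re (Eiter (N + j) k)) + M"
    "Re (Eiter (N + Suc j) k) \<ge> Re (Eiter (N + j) k) + 1"
proof -
  define w where "w = Eiter (N + Suc j) k"
  define x where "x = Re (Eiter (N + j) k)"
  have w: "w = exp (Eiter (N + j) k) + k" by (simp add: w_def Eiter_Suc)
  have kM: "norm k < M" using assms Lam_M Y_Lam by blast
  have ne: "norm (exp (Eiter (N + j) k)) = exp x" by (simp add: x_def)
  show "norm w \<le> exp x + M" using w ne kM norm_triangle_ineq[of "exp (Eiter (N + j) k)" k] by simp
  have "norm w \<ge> exp x - M" using w ne kM norm_triangle_ineq2[of "exp (Eiter (N + j) k)" "-k"] by simp
  moreover have "norm w \<le> 2 * Re w" using Y_P[OF assms, of "Suc j"] by (intro Pset_norm) (auto simp: w_def)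
  moreover have "x > \<xi>" using Y_P[OF assms, of j] by (simp add: x_def)
  then have "exp x \<ge> 2 * x + 2 + M" using xi by (intro exp_big) auto
  ultimately show "Re w \<ge> x + 1" by linarith
qed

definition X :: "nat \<Rightarrow> complex \<Rightarrow> real" where
  "X j k = of_int (fst (gr (Eiter (N + j) k))) / 8"

lemma X_ge: assumes "k \<in> Y" shows "X j k \<ge> \<xi> - 1/8"
  using same_cell(4)[of "Eiter (N + j) k" "Eiter (N + j) k"] Y_P(1)[OF assms, of j]
  by (simp add: X_def)

lemma expX: assumes "k \<in> Y" shows "exp (X j k) \<ge> 16"
proof -
  have "X j k \<ge> 15" using X_ge[OF assms, of j] xi M by linarith
  then show ?thesis using exp_ge_add_one_self[of "X j k"] by linarith
qed

lemma expand:
  assumes "k \<in> Y" "k' \<in> Y" "\<forall>j\<le>K. gr (Eiter (N + j) k) = gr (Eiter (N + j) k')"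
  shows "2 * norm (k - k') * (\<Prod>j<K. exp (X j k) / 8) \<le> norm (Eiter (N + K) k - Eiter (N + K) k')"
  using assms(3)
proof (induction K)
  case 0
  then show ?case using lip0[OF Y_Lam[OF assms(1)] Y_Lam[OF assms(2)]] by simp
next
  case (Suc K)
  define u where "u = Eiter (N + K) k"
  define v where "v = Eiter (N + K) k'"
  define d where "d = norm (u - v)"
  define P where "P = (\<Prod>j<K. exp (X j k) / 8)"
  have IH: "2 * norm (k - k') * P \<le> d" using Suc by (simp add: P_def d_def u_def v_def)
  have P1: "P \<ge> 1" unfolding P_def 
  proof (intro prod_ge_1)
    fix j show "1 \<le> exp (X j k) / 8" using expX[OF assms(1), of j] by simp
  qed
  have kk: "norm (k - k') \<le> d / 2"
  proof -
    have "norm (k - k') * 1 \<le> norm (k - k') * P" using P1 by (intro mult_left_mono) auto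
    then show ?thesis using IH by simp
  qed
  have cell: "gr u = gr v" using Suc.prems by (simp add: u_def v_def)
  have d14: "d \<le> 1/4" using same_cell(1)[OF cell] by (simp add: d_def)
  have Xv: "X K k \<le> Re v" using same_cell(2)[OF cell] by (simp add: X_def u_def)
  have E16: "exp (X K k) \<ge> 16" by (rule expX[OF assms(1)])
  have "exp (X K k) * d / 4 \<le> exp (Re v) * d / 4" using Xv by (simp add: d_def divide_right_mono mult_right_mono)
  also have "\<dots> \<le> norm (exp u - exp v)" using exp_diff_lower[OF d14[unfolded d_def]] by (simp add: d_def)
  finally have ed: "exp (X K k) * d / 4 \<le> norm (exp u - exp v)" .
  have eq: "Eiter (N + Suc K) k - Eiter (N + Suc K) k' = (exp u - exp v) + (k - k')"
    by (simp add: Eiter_Suc u_def v_def)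
  have "norm (exp u - exp v) - norm (k - k') \<le> norm (Eiter (N + Suc K) k - Eiter (N + Suc K) k')"
    unfolding eq by (rule norm_diff_ineq)
  moreover have "exp (X K k) * d / 8 \<le> exp (X K k) * d / 4 - d / 2"
  proof -
    have "16 * d \<le> exp (X K k) * d" using E16 d_def by (intro mult_right_mono) auto
    then show ?thesis using d_def norm_ge_zero[of "u - v"] by linarith
  qed
  moreover have "2 * norm (k - k') * (P * (exp (X K k) / 8)) \<le> d * (exp (X K k) / 8)"
  proof -
    have "(2 * norm (k - k') * P) * (exp (X K k) / 8) \<le> d * (exp (X K k) / 8)"
      using IH by (intro mult_right_mono) auto
    then show ?thesis by (simp add: mult.assoc)
  qed
  moreover have "d * (exp (X K k) / 8) = exp (X K k) * d / 8" by simp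
  ultimately have "2 * norm (k - k') * (P * (exp (X K k) / 8)) \<le> norm (Eiter (N + Suc K) k - Eiter (N + Suc K) k')"
    using ed kk \<open>d * (exp (X K k) / 8) = exp (X K k) * d / 8\<close> by linarith
  then show ?case by (simp add: P_def)
qed

end



context psetup begin

definition traj :: "nat \<Rightarrow> complex \<Rightarrow> (int \<times> int) list" where
  "traj K k = map (\<lambda>j. gr (Eiter (N + j) k)) [0..<Suc K]"

definition Rb :: "int \<Rightarrow> real" where "Rb m = exp ((of_int m + 1) / 8) + M"

definition succ :: "int \<times> int \<Rightarrow> (int \<times> int) set" where
  "succ \<tau> = {fst \<tau> + 8 .. \<lfloor>8 * Rb (fst \<tau>)\<rfloor>} \<times> {\<lfloor>- 8 * Rb (fst \<tau>) powr (1/p)\<rfloor> .. \<lfloor>8 * Rb (fst \<tau>) powr (1/p)\<rfloor>}"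

definition B0 :: "(int \<times> int) set" where
  "B0 = {\<lfloor>8 * \<xi>\<rfloor> .. \<lfloor>8 * Re c + 8\<rfloor>} \<times> {\<lfloor>8 * Im c - 8\<rfloor> .. \<lfloor>8 * Im c + 8\<rfloor>}"

fun Fs :: "nat \<Rightarrow> (int \<times> int) list set" where
  "Fs 0 = (\<lambda>\<tau>. [\<tau>]) ` B0"
| "Fs (Suc K) = (\<lambda>(\<sigma>, \<tau>). \<sigma> @ [\<tau>]) ` (SIGMA \<sigma>:Fs K. succ (last \<sigma>))"

lemma traj_Suc: "traj (Suc K) k = traj K k @ [gr (Eiter (N + Suc K) k)]"
  by (simp add: traj_def)

lemma traj_last: "last (traj K k) = gr (Eiter (N + K) k)"
  by (simp add: traj_def)

lemma traj_nth: "j \<le> K \<Longrightarrow> traj K k ! j = gr (Eiter (N + j) k)"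
  by (simp add: traj_def less_Suc_eq_le[symmetric] del: upt_Suc)
  
lemma traj_len: "length (traj K k) = Suc K" by (simp add: traj_def)

lemma pi4: "pi / 4 < (1::real)" using pi_less_4 by simp

lemma traj0: assumes "k \<in> Y" shows "gr (Eiter N k) \<in> B0"
proof -
  have q: "Eiter N k \<in> open_square c (pi/4)" using assms by (auto simp: Y_def Lam_def)
  then have a: "\<bar>Re (Eiter N k) - Re c\<bar> < 1" "\<bar>Im (Eiter N k) - Im c\<bar> < 1"
    using pi4 by (auto simp: open_square_def)
  have b: "Re (Eiter N k) > \<xi>" using Y_P(1)[OF assms, of 0] by simp
  have "\<lfloor>8 * \<xi>\<rfloor> \<le> \<lfloor>8 * Re (Eiter N k)\<rfloor>" using b by (intro floor_mono) simp
  moreover have "\<lfloor>8 * Re (Eiter N k)\<rfloor> \<le> \<lfloor>8 * Re c + 8\<rfloor>" using a by (intro floor_mono) simp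
  moreover have "\<lfloor>8 * Im c - 8\<rfloor> \<le> \<lfloor>8 * Im (Eiter N k)\<rfloor>" using a by (intro floor_mono) simp
  moreover have "\<lfloor>8 * Im (Eiter N k)\<rfloor> \<le> \<lfloor>8 * Im c + 8\<rfloor>" using a by (intro floor_mono) simp
  ultimately show ?thesis unfolding B0_def gr_def by (simp only: mem_Times_iff fst_conv snd_conv atLeastAtMost_iff)
qed

lemma traj_step: assumes "k \<in> Y" shows "gr (Eiter (N + Suc K) k) \<in> succ (gr (Eiter (N + K) k))"
proof -
  define u where "u = Eiter (N + K) k"
  define w where "w = Eiter (N + Suc K) k"
  define m where "m = \<lfloor>8 * Re u\<rfloor>"
  have fm: "fst (gr u) = m" by (simp add: gr_def m_def)
  have g1: "Re w \<ge> Re u + 1" "norm w \<le> exp (Re u) + M" using growth[OF assms, of K] by (auto simp: u_def w_def)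
  have ru: "Re u < (of_int m + 1) / 8" using floor_correct[of "8 * Re u"] unfolding m_def by (simp add: field_simps)
  have "Re w \<le> norm w" by (rule complex_Re_le_cmod)
  also have "\<dots> \<le> exp (Re u) + M" by (rule g1(2))
  also have "\<dots> \<le> Rb m" unfolding Rb_def using ru by simp
  finally have wR: "Re w \<le> Rb m" .
  have wpos: "Re w > 0" using Y_P(1)[OF assms, of "Suc K"] xi M by (simp add: w_def)
  have "\<bar>Im w\<bar> < Re w powr (1/p)" using Y_P(2)[OF assms, of "Suc K"] by (simp add: w_def)
  also have "\<dots> \<le> Rb m powr (1/p)" using wR wpos p by (intro powr_mono2) auto
  finally have im: "\<bar>Im w\<bar> < Rb m powr (1/p)" .
  have "m + 8 \<le> \<lfloor>8 * Re w\<rfloor>"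
  proof -
    have "\<lfloor>8 * Re u + 8\<rfloor> \<le> \<lfloor>8 * Re w\<rfloor>" using g1(1) by (intro floor_mono) simp
    then show ?thesis by (simp add: m_def)
  qed
  moreover have "\<lfloor>8 * Re w\<rfloor> \<le> \<lfloor>8 * Rb m\<rfloor>" using wR by (intro floor_mono) simp
  moreover have "\<lfloor>- 8 * Rb m powr (1/p)\<rfloor> \<le> \<lfloor>8 * Im w\<rfloor>" using im by (intro floor_mono) simp
  moreover have "\<lfloor>8 * Im w\<rfloor> \<le> \<lfloor>8 * Rb m powr (1/p)\<rfloor>" using im by (intro floor_mono) simp
  ultimately show ?thesis unfolding succ_def gr_def using fm
    by (simp add: u_def w_def m_def gr_def)
qed

lemma traj_Fs: "k \<in> Y \<Longrightarrow> traj K k \<in> Fs K"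
proof (induction K)
  case 0
  then show ?case using traj0[OF 0] by (simp add: traj_def)
next
  case (Suc K)
  have "(traj K k, gr (Eiter (N + Suc K) k)) \<in> (SIGMA \<sigma>:Fs K. succ (last \<sigma>))"
    using Suc traj_step[OF Suc.prems, of K] by (simp add: traj_last)
  then show ?case by (simp add: traj_Suc image_iff)
qed

lemma Fs_props: "\<sigma> \<in> Fs K \<Longrightarrow> length \<sigma> = Suc K \<and> fst (last \<sigma>) \<ge> \<lfloor>8 * \<xi>\<rfloor> + 8 * int K"
proof (induction K arbitrary: \<sigma>)
  case 0
  then show ?case by (auto simp: B0_def)
next
  case (Suc K)
  then obtain \<sigma>' \<tau> where s: "\<sigma> = \<sigma>' @ [\<tau>]" "\<sigma>' \<in> Fs K" "\<tau> \<in> succ (last \<sigma>')" by auto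
  then show ?case using Suc.IH[OF s(2)] by (auto simp: succ_def)
qed

lemma finite_Fs: "finite (Fs K)"
  by (induction K) (auto simp: B0_def succ_def)

lemma nat_le_real: "of_int z \<le> r \<Longrightarrow> 0 \<le> r \<Longrightarrow> real (nat z) \<le> r"
  by (cases "z \<ge> 0") auto

lemma card_succ:
  assumes m: "fst \<tau> \<ge> \<lfloor>8 * \<xi>\<rfloor>"
  shows "real (card (succ \<tau>)) \<le> 1152 * exp ((1 + 1/p) * (of_int (fst \<tau>) / 8))"
proof -
  define m where "m = fst \<tau>"
  define x :: real where "x = of_int m / 8"
  define R where "R = Rb m"
  define S where "S = R powr (1/p)"
  have mx: "real_of_int m > 8 * \<xi> - 1" using m floor_correct[of "8 * \<xi>"] unfolding m_def by linarith
  then have xge: "x \<ge> \<xi> - 1/8" by (simp add: x_def)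
  have m0: "m \<ge> 0" using mx xi M by (smt (verit) of_int_less_0_iff)
  have Rx: "R = exp (x + 1/8) + M" by (simp add: R_def Rb_def x_def add_divide_distrib)
  have "exp (x + 1/8) \<ge> 1 + (x + 1/8)" by (rule exp_ge_add_one_self)
  then have eM: "exp (x + 1/8) \<ge> M + 1" using xge xi M by linarith
  then have R1: "R \<ge> 1" and R2: "R \<le> 2 * exp (x + 1/8)" using Rx M by auto
  have S1: "S \<ge> 1" unfolding S_def using R1 p by (intro ge_one_powr_ge_zero) auto
  have cA: "real (card {m + 8 .. \<lfloor>8 * R\<rfloor>}) \<le> 8 * R"
  proof -
    have "real_of_int (\<lfloor>8 * R\<rfloor> - (m + 8) + 1) \<le> 8 * R"
      using floor_correct[of "8 * R"] m0 by linarith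
    then show ?thesis using R1 unfolding card_atLeastAtMost_int by (intro nat_le_real) auto
  qed
  have cB: "real (card {\<lfloor>- 8 * S\<rfloor> .. \<lfloor>8 * S\<rfloor>}) \<le> 18 * S"
  proof -
    have "real_of_int (\<lfloor>8 * S\<rfloor> - \<lfloor>- 8 * S\<rfloor> + 1) \<le> 16 * S + 2"
      using floor_correct[of "8 * S"] floor_correct[of "- 8 * S"] by linarith
    then show ?thesis using S1 unfolding card_atLeastAtMost_int by (intro nat_le_real) auto
  qed
  have "card (succ \<tau>) = card {m + 8 .. \<lfloor>8 * R\<rfloor>} * card {\<lfloor>- 8 * S\<rfloor> .. \<lfloor>8 * S\<rfloor>}"
    by (simp add: succ_def m_def R_def S_def card_cartesian_product)
  then have "real (card (succ \<tau>)) \<le> (8 * R) * (18 * S)"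
    using cA cB by (simp only: of_nat_mult) (intro mult_mono, auto)
  also have "\<dots> = 144 * R powr (1 + 1/p)" using R1 by (simp add: S_def powr_add)
  also have "R powr (1 + 1/p) \<le> (2 * exp (x + 1/8)) powr (1 + 1/p)"
    using R1 R2 p by (intro powr_mono2) auto
  also have "\<dots> = 2 powr (1 + 1/p) * exp ((1 + 1/p) * x) * exp ((1 + 1/p) / 8)"
    by (simp add: powr_mult exp_powr_real algebra_simps flip: exp_add)
  also have "\<dots> \<le> 4 * exp ((1 + 1/p) * x) * 2"
  proof (intro mult_mono)
    have "2 powr (1 + 1/p) \<le> 2 powr (2::real)" using p by (intro powr_mono) auto
    then show "2 powr (1 + 1/p) \<le> 4" by simp
    have "1/p \<le> 1" using p by simp
    then have "exp ((1 + 1/p) / 8) \<le> exp (1/2)" by simp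
    then show "exp ((1 + 1/p) / 8) \<le> (2::real)" using exp_half_le2 by linarith
  qed auto
  finally show ?thesis by (simp add: x_def m_def)
qed

end



context psetup begin

definition a :: "int \<Rightarrow> real" where "a m = 8 * exp (- (of_int m / 8))"

definition wt :: "real \<Rightarrow> (int \<times> int) list \<Rightarrow> real" where
  "wt s \<sigma> = (\<Prod>j<length \<sigma> - 1. a (fst (\<sigma> ! j)) powr s)"

definition W :: "real \<Rightarrow> nat \<Rightarrow> real" where "W s K = (\<Sum>\<sigma>\<in>Fs K. wt s \<sigma>)"

definition gam :: "real \<Rightarrow> nat \<Rightarrow> real" where
  "gam s K = 1152 * 8 powr s * exp (- (s - 1 - 1/p) * (\<xi> - 1/8 + real K))"

lemma wt_nonneg: "wt s \<sigma> \<ge> 0" by (simp add: wt_def prod_nonneg)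

lemma level:
  assumes s: "s > 1 + 1/p" and m: "fst \<tau> \<ge> \<lfloor>8 * \<xi>\<rfloor> + 8 * int K"
  shows "a (fst \<tau>) powr s * real (card (succ \<tau>)) \<le> gam s K"
proof -
  define x :: real where "x = of_int (fst \<tau>) / 8"
  have mx: "real_of_int (fst \<tau>) \<ge> real_of_int (\<lfloor>8 * \<xi>\<rfloor> + 8 * int K)" using m by linarith
  have f: "8 * \<xi> - 1 < real_of_int \<lfloor>8 * \<xi>\<rfloor>" using floor_correct[of "8 * \<xi>"] by linarith
  have "real_of_int (fst \<tau>) \<ge> 8 * \<xi> - 1 + 8 * real K" using mx f by linarith
  then have xge: "x \<ge> \<xi> - 1/8 + real K" unfolding x_def by (simp add: field_simps)
  have m0: "fst \<tau> \<ge> \<lfloor>8 * \<xi>\<rfloor>" using m by simp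
  have "a (fst \<tau>) powr s = 8 powr s * exp (- x * s)"
    by (simp add: a_def x_def powr_mult exp_powr_real)
  moreover have "real (card (succ \<tau>)) \<le> 1152 * exp ((1 + 1/p) * x)"
    using card_succ[OF m0] by (simp add: x_def)
  ultimately have "a (fst \<tau>) powr s * real (card (succ \<tau>)) \<le> 8 powr s * exp (- x * s) * (1152 * exp ((1 + 1/p) * x))"
    by (simp add: mult_left_mono)
  also have "\<dots> = 1152 * 8 powr s * exp (- (s - 1 - 1/p) * x)"
    by (simp add: algebra_simps flip: exp_add)
  also have "\<dots> \<le> gam s K" unfolding gam_def using s xge
    by (intro mult_left_mono) (auto simp: mult_left_mono)
  finally show ?thesis .
qed

lemma wt_snoc: "\<sigma> \<noteq> [] \<Longrightarrow> wt s (\<sigma> @ [\<tau>]) = wt s \<sigma> * a (fst (last \<sigma>)) powr s"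
proof -
  assume ne: "\<sigma> \<noteq> []"
  then obtain n where n: "length \<sigma> = Suc n" by (cases \<sigma>) auto
  have "wt s (\<sigma> @ [\<tau>]) = (\<Prod>j<Suc n. a (fst ((\<sigma> @ [\<tau>]) ! j)) powr s)" by (simp add: wt_def n)
  also have "\<dots> = (\<Prod>j<Suc n. a (fst (\<sigma> ! j)) powr s)"
    by (intro prod.cong) (auto simp: nth_append n)
  also have "\<dots> = wt s \<sigma> * a (fst (\<sigma> ! n)) powr s" by (simp add: wt_def n)
  also have "\<sigma> ! n = last \<sigma>" using ne n by (simp add: last_conv_nth)
  finally show ?thesis .
qed

lemma W_Suc:
  assumes s: "s > 1 + 1/p"
  shows "W s (Suc K) \<le> gam s K * W s K"
proof -
  have inj: "inj_on (\<lambda>(\<sigma>, \<tau>). \<sigma> @ [\<tau>]) (SIGMA \<sigma>:Fs K. succ (last \<sigma>))"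
    by (auto simp: inj_on_def)
  have fin: "\<And>\<sigma>. finite (succ \<sigma>)" by (simp add: succ_def)
  have "W s (Suc K) = (\<Sum>x\<in>(SIGMA \<sigma>:Fs K. succ (last \<sigma>)). wt s ((\<lambda>(\<sigma>, \<tau>). \<sigma> @ [\<tau>]) x))"
    unfolding W_def Fs.simps by (rule sum.reindex[OF inj, unfolded comp_def])
  also have "\<dots> = (\<Sum>\<sigma>\<in>Fs K. \<Sum>\<tau>\<in>succ (last \<sigma>). wt s (\<sigma> @ [\<tau>]))"
    by (subst sum.Sigma) (auto simp: finite_Fs fin prod.case_distrib)
  also have "\<dots> = (\<Sum>\<sigma>\<in>Fs K. wt s \<sigma> * (a (fst (last \<sigma>)) powr s * real (card (succ (last \<sigma>)))))"
  proof (intro sum.cong refl)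
    fix \<sigma> assume "\<sigma> \<in> Fs K"
    then have "\<sigma> \<noteq> []" using Fs_props by fastforce
    then show "(\<Sum>\<tau>\<in>succ (last \<sigma>). wt s (\<sigma> @ [\<tau>])) = wt s \<sigma> * (a (fst (last \<sigma>)) powr s * real (card (succ (last \<sigma>))))"
      by (simp add: wt_snoc)
  qed
  also have "\<dots> \<le> (\<Sum>\<sigma>\<in>Fs K. wt s \<sigma> * gam s K)"
  proof (intro sum_mono mult_left_mono wt_nonneg)
    fix \<sigma> assume "\<sigma> \<in> Fs K"
    then show "a (fst (last \<sigma>)) powr s * real (card (succ (last \<sigma>))) \<le> gam s K"
      using Fs_props level[OF s] by blast
  qed
  also have "\<dots> = gam s K * W s K" unfolding W_def by (simp add: sum_distrib_left mult.commute)
  finally show ?thesis .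
qed

lemma W_bound:
  assumes s: "s > 1 + 1/p"
  shows "W s K \<le> real (card B0) * (\<Prod>j<K. gam s j)"
proof (induction K)
  case 0
  have "W s 0 = (\<Sum>\<sigma>\<in>(\<lambda>\<tau>. [\<tau>]) ` B0. wt s \<sigma>)" by (simp add: W_def)
  also have "\<dots> = (\<Sum>\<tau>\<in>B0. wt s [\<tau>])" by (subst sum.reindex) (auto simp: inj_on_def)
  also have "\<dots> = real (card B0)" by (simp add: wt_def)
  finally show ?case by simp
next
  case (Suc K)
  have g: "gam s K \<ge> 0" by (simp add: gam_def)
  have "W s (Suc K) \<le> gam s K * W s K" by (rule W_Suc[OF s])
  also have "\<dots> \<le> gam s K * (real (card B0) * (\<Prod>j<K. gam s j))" using Suc g by (intro mult_left_mono)
  finally show ?case by (simp add: algebra_simps)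
qed

lemma gam_small:
  assumes s: "s > 1 + 1/p"
  shows "\<exists>J. \<forall>j\<ge>J. gam s j \<le> 1/2"
proof -
  define \<epsilon> where "\<epsilon> = s - 1 - 1/p"
  have e: "\<epsilon> > 0" using s by (simp add: \<epsilon>_def)
  define G where "G = 1152 * 8 powr s * exp (- \<epsilon> * (\<xi> - 1/8))"
  have g: "gam s j = G * exp (- \<epsilon>) ^ j" for j
  proof -
    have "exp (- \<epsilon> * (\<xi> - 1/8 + real j)) = exp (- \<epsilon> * (\<xi> - 1/8)) * exp (real j * (- \<epsilon>))"
      by (simp add: algebra_simps flip: exp_add)
    then show ?thesis by (simp add: gam_def G_def \<epsilon>_def exp_of_nat_mult)
  qed
  have "(\<lambda>j. G * exp (- \<epsilon>) ^ j) \<longlonglongrightarrow> G * 0"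
    using e by (intro tendsto_mult tendsto_const LIMSEQ_power_zero) auto
  then have "eventually (\<lambda>j. G * exp (- \<epsilon>) ^ j < 1/2) sequentially"
    by (intro order_tendstoD) auto
  then show ?thesis unfolding g eventually_sequentially by (meson less_imp_le)
qed

lemma W_small:
  fixes e \<delta> :: real
  assumes s: "s > 1 + 1/p" and e: "e > 0" and d: "\<delta> > 0"
  shows "\<exists>K. W s K \<le> e \<and> (1/2) ^ K \<le> \<delta>"
proof -
  obtain J where J: "\<forall>j\<ge>J. gam s j \<le> 1/2" using gam_small[OF s] by blast
  have g0: "\<And>j. gam s j \<ge> 0" by (simp add: gam_def)
  define PJ where "PJ = (\<Prod>j<J. gam s j)"
  have PJ0: "PJ \<ge> 0" by (simp add: PJ_def prod_nonneg g0)
  have pb: "(\<Prod>j<J + K. gam s j) \<le> PJ * (1/2) ^ K" for K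
  proof (induction K)
    case 0 then show ?case by (simp add: PJ_def)
  next
    case (Suc K)
    have "(\<Prod>j<J + Suc K. gam s j) = (\<Prod>j<J + K. gam s j) * gam s (J + K)" by simp
    also have "\<dots> \<le> (PJ * (1/2) ^ K) * (1/2)"
      using Suc J g0 PJ0 by (intro mult_mono) (auto simp: prod_nonneg)
    finally show ?case by simp
  qed
  define C where "C = real (card B0) * PJ + 1"
  have C: "C > 0" using PJ0 unfolding C_def by (smt (verit) of_nat_0_le_iff mult_nonneg_nonneg)
  obtain K' where K': "(1/2::real) ^ K' < min \<delta> (e / C)" using real_arch_pow_inv[of "min \<delta> (e / C)" "1/2"] e d C by auto
  have "W s (J + K') \<le> real (card B0) * (\<Prod>j<J + K'. gam s j)" by (rule W_bound[OF s])
  also have "\<dots> \<le> real (card B0) * (PJ * (1/2) ^ K')" by (intro mult_left_mono pb) auto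
  also have "\<dots> \<le> C * (1/2) ^ K'" unfolding C_def by (simp add: algebra_simps)
  also have "\<dots> \<le> C * (e / C)" using K' C by (intro mult_left_mono) auto
  also have "\<dots> = e" using C by simp
  finally have "W s (J + K') \<le> e" .
  moreover have "(1/2::real) ^ (J + K') \<le> (1/2) ^ K'" by (intro power_decreasing) auto
  moreover have "(1/2::real) ^ K' \<le> \<delta>" using K' by simp
  ultimately have "W s (J + K') \<le> e \<and> (1/2::real) ^ (J + K') \<le> \<delta>" by linarith
  then show ?thesis by blast
qed

end



context psetup begin

definition piece :: "complex set \<Rightarrow> nat \<Rightarrow> (int \<times> int) list \<Rightarrow> complex set" where
  "piece A K \<sigma> = {k \<in> A. traj K k = \<sigma>}"

lemma Y_bounded: "A \<subseteq> Y \<Longrightarrow> bounded A"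
proof -
  assume "A \<subseteq> Y"
  then have "A \<subseteq> ball 0 M" using sub by (auto simp: Y_def Lam_def)
  then show "bounded A" using bounded_subset[OF bounded_ball] by blast
qed

lemma piece_bound:
  assumes A: "A \<subseteq> Y" and \<sigma>: "\<sigma> \<in> Fs K" and s: "s > 0"
  shows "diameter (piece A K \<sigma>) \<le> (1/2) ^ Suc K" "diam_pow s (piece A K \<sigma>) \<le> ennreal (wt s \<sigma>)"
proof -
  have bd: "bounded (piece A K \<sigma>)" using Y_bounded[OF A] by (auto simp: piece_def intro: bounded_subset)
  have "diameter (piece A K \<sigma>) \<le> (1/2) ^ Suc K \<and> diam_pow s (piece A K \<sigma>) \<le> ennreal (wt s \<sigma>)"
  proof (cases "piece A K \<sigma> = {}")
    case True then show ?thesis by (simp add: diam_pow_def)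
  next
    case False
    then obtain k0 where k0: "k0 \<in> A" "traj K k0 = \<sigma>" by (auto simp: piece_def)
    have k0Y: "k0 \<in> Y" using k0 A by auto
    have sj: "\<And>j. j < K \<Longrightarrow> fst (\<sigma> ! j) = \<lfloor>8 * Re (Eiter (N + j) k0)\<rfloor>"
      using k0(2) traj_nth[of _ K k0] by (auto simp: gr_def)
    define Pe where "Pe = (\<Prod>j<K. exp (X j k0) / 8)"
    define Pa where "Pa = (\<Prod>j<K. a (fst (\<sigma> ! j)))"
    have Pe1: "Pe \<ge> 1" unfolding Pe_def
    proof (intro prod_ge_1)
      fix j show "1 \<le> exp (X j k0) / 8" using expX[OF k0Y, of j] by simp
    qed
    have aX: "a (fst (\<sigma> ! j)) = inverse (exp (X j k0) / 8)" if "j < K" for j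
      using sj[OF that] by (simp add: a_def X_def gr_def exp_minus field_simps)
    have PaPe: "Pa = inverse Pe"
    proof -
      have "Pa = (\<Prod>j<K. (inverse \<circ> (\<lambda>j. exp (X j k0) / 8)) j)"
        unfolding Pa_def by (intro prod.cong) (auto simp: aX)
      also have "\<dots> = inverse Pe" unfolding Pe_def by (rule prod_inversef)
      finally show ?thesis .
    qed
    have Pa0: "Pa \<ge> 0" using PaPe Pe1 by simp
    have Pah: "Pa \<le> (1/2) ^ K"
    proof -
      have "Pa \<le> (\<Prod>j<K. (1/2::real))" unfolding Pa_def
      proof (intro prod_mono conjI)
        fix j assume j: "j \<in> {..<K}"
        show "0 \<le> a (fst (\<sigma> ! j))" by (simp add: a_def)
        have "inverse (exp (X j k0) / 8) \<le> inverse (2::real)"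
          using expX[OF k0Y, of j] by (intro le_imp_inverse_le) auto
        then show "a (fst (\<sigma> ! j)) \<le> 1/2" using aX[of j] j by simp
      qed
      then show ?thesis by simp
    qed
    have dk: "norm (k - k') \<le> Pa / 2" if kk: "k \<in> piece A K \<sigma>" "k' \<in> piece A K \<sigma>" for k k'
    proof -
      have kY: "k \<in> Y" "k' \<in> Y" using kk A by (auto simp: piece_def)
      have tr: "traj K k = \<sigma>" "traj K k' = \<sigma>" using kk by (auto simp: piece_def)
      have eqg: "\<forall>j\<le>K. gr (Eiter (N + j) k) = gr (Eiter (N + j) k')"
        using tr traj_nth[of _ K k] traj_nth[of _ K k'] by auto
      have Xk: "\<And>j. j \<le> K \<Longrightarrow> X j k = X j k0"
        using tr k0(2) traj_nth[of _ K k] traj_nth[of _ K k0] by (auto simp: X_def)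
      have "2 * norm (k - k') * Pe \<le> norm (Eiter (N + K) k - Eiter (N + K) k')"
      proof -
        have "(\<Prod>j<K. exp (X j k) / 8) = Pe" unfolding Pe_def by (intro prod.cong) (auto simp: Xk)
        then show ?thesis using expand[OF kY eqg] by simp
      qed
      also have "\<dots> \<le> 1/4" using same_cell(1) eqg by auto
      finally have "2 * norm (k - k') * Pe \<le> 1/4" .
      then have "norm (k - k') \<le> inverse Pe / 8" using Pe1 by (simp add: field_simps)
      moreover have "inverse Pe \<ge> 0" using Pe1 by simp
      ultimately show ?thesis using PaPe by linarith
    qed
    have dm: "diameter (piece A K \<sigma>) \<le> Pa / 2"
      using dk Pa0 by (intro diameter_le) auto
    have "diameter (piece A K \<sigma>) \<le> (1/2) ^ Suc K" using dm Pah by simp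
    moreover have "diam_pow s (piece A K \<sigma>) \<le> ennreal (wt s \<sigma>)"
    proof -
      have "diameter (piece A K \<sigma>) powr s \<le> (Pa / 2) powr s"
        using dm s diameter_ge_0[OF bd] by (intro powr_mono2) auto
      also have "\<dots> \<le> Pa powr s" using Pa0 s by (intro powr_mono2) auto
      also have "\<dots> = wt s \<sigma>" using Fs_props[OF \<sigma>] by (simp add: wt_def Pa_def prod_powr_distrib)
      finally show ?thesis using False s by (simp add: diam_pow_def ennreal_leI)
    qed
    ultimately show ?thesis by blast
  qed
  then show "diameter (piece A K \<sigma>) \<le> (1/2) ^ Suc K" "diam_pow s (piece A K \<sigma>) \<le> ennreal (wt s \<sigma>)"
    by auto
qed

lemma content_zero:
  assumes A: "A \<subseteq> Y" and s: "s > 1 + 1/p" and d: "\<delta> > 0"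
  shows "hausdorff_content s \<delta> A = 0"
proof -
  have s0: "s > 0" using s p by (smt (verit) divide_pos_pos)
  have "hausdorff_content s \<delta> A \<le> 0 + ennreal e" if e: "e > 0" for e
  proof -
    obtain K where K: "W s K \<le> e" "(1/2) ^ K \<le> \<delta>" using W_small[OF s e d] by blast
    obtain xs where xs: "set xs = Fs K" "distinct xs" using finite_distinct_list[OF finite_Fs] by blast
    define U where "U i = (if i < length xs then piece A K (xs ! i) else {})" for i
    have cov: "A \<subseteq> (\<Union>i. U i)"
    proof
      fix k assume k: "k \<in> A"
      then have "traj K k \<in> set xs" using xs traj_Fs A by auto
      then obtain i where i: "i < length xs" "xs ! i = traj K k" by (auto simp: in_set_conv_nth)
      then have "k \<in> U i" using k by (simp add: U_def piece_def)
      then show "k \<in> (\<Union>i. U i)" by blast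
    qed
    have xsF: "\<And>i. i < length xs \<Longrightarrow> xs ! i \<in> Fs K" using xs(1) nth_mem by blast
    have bU: "bounded (U i) \<and> diameter (U i) \<le> \<delta>" for i
    proof (cases "i < length xs")
      case True
      have "U i \<subseteq> A" using True by (auto simp: U_def piece_def)
      then have "bounded (U i)" using Y_bounded[OF A] bounded_subset by blast
      moreover have "diameter (U i) \<le> (1/2) ^ Suc K" using piece_bound(1)[OF A xsF[OF True] s0] True by (simp add: U_def)
      moreover have "(1/2::real) ^ Suc K \<le> (1/2) ^ K" by (intro power_decreasing) auto
      ultimately show ?thesis using K(2) by linarith
    next
      case False then show ?thesis using d by (simp add: U_def)
    qed
    have "hausdorff_content s \<delta> A \<le> (\<Sum>i. diam_pow s (U i))"
      unfolding hausdorff_content_def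
    proof (rule Inf_lower)
      show "(\<Sum>i. diam_pow s (U i)) \<in> {\<Sum>i. diam_pow s (U i) |U. A \<subseteq> (\<Union>i. U i) \<and> (\<forall>i. bounded (U i) \<and> diameter (U i) \<le> \<delta>)}"
        using cov bU by (intro CollectI exI[of _ U] conjI) auto
    qed
    also have "(\<Sum>i. diam_pow s (U i)) = (\<Sum>i<length xs. diam_pow s (U i))"
      by (rule suminf_finite) (auto simp: U_def diam_pow_def)
    also have "\<dots> \<le> (\<Sum>i<length xs. ennreal (wt s (xs ! i)))"
      by (intro sum_mono) (simp add: U_def piece_bound(2)[OF A xsF s0])
    also have "\<dots> = ennreal (\<Sum>i<length xs. wt s (xs ! i))" by (simp add: wt_nonneg)
    also have "(\<Sum>i<length xs. wt s (xs ! i)) = W s K"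
    proof -
      have "(\<Sum>i<length xs. wt s (xs ! i)) = sum_list (map (wt s) xs)"
      proof -
        have "sum_list (map (wt s) xs) = (\<Sum>i = 0..<length (map (wt s) xs). map (wt s) xs ! i)"
          by (rule sum_list_sum_nth)
        also have "\<dots> = (\<Sum>i<length xs. wt s (xs ! i))"
          unfolding atLeast0LessThan length_map by (intro sum.cong) auto
        finally show ?thesis by simp
      qed
      also have "\<dots> = sum (wt s) (set xs)" using xs(2) by (rule sum_list_distinct_conv_sum_set)
      finally show ?thesis by (simp add: W_def xs(1))
    qed
    also have "ennreal (W s K) \<le> 0 + ennreal e" using K(1) by (simp add: ennreal_leI)
    finally show ?thesis .
  qed
  then have "hausdorff_content s \<delta> A \<le> 0" by (rule ennreal_le_epsilon) auto
  then show ?thesis by simp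
qed

lemma measure_zero:
  assumes A: "A \<subseteq> Y" and s: "s > 1 + 1/p"
  shows "hausdorff_measure s A = 0"
proof -
  have "{hausdorff_content s \<delta> A | \<delta>. \<delta> > 0} = {0}"
  proof
    show "{hausdorff_content s \<delta> A | \<delta>. \<delta> > 0} \<subseteq> {0}" using content_zero[OF A s] by auto
    have "hausdorff_content s 1 A = 0" using content_zero[OF A s] by simp
    then show "{0} \<subseteq> {hausdorff_content s \<delta> A | \<delta>. \<delta> > 0}"
      by (intro subsetI) (simp, rule exI[of _ 1], simp)
  qed
  then show ?thesis by (simp add: hausdorff_measure_def)
qed

lemma dim_bound:
  assumes A: "A \<subseteq> Y"
  shows "hausdorff_dim A \<le> 1 + 1/p"
proof (rule ccontr)
  define S where "S = {s. s \<ge> 0 \<and> hausdorff_measure s A = 0}"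
  assume "\<not> hausdorff_dim A \<le> 1 + 1/p"
  then have gt: "Inf S > 1 + 1/p" by (simp add: hausdorff_dim_def S_def)
  define t where "t = (Inf S + (1 + 1/p)) / 2"
  have t: "t > 1 + 1/p" "t < Inf S" using gt by (auto simp: t_def)
  have "1/p > 0" using p by simp
  then have t0: "t \<ge> 0" using t(1) by linarith
  then have "t \<in> S" using measure_zero[OF A t(1)] by (simp add: S_def)
  moreover have "bdd_below S" by (auto simp: S_def bdd_below_def)
  ultimately have "Inf S \<le> t" by (rule cInf_lower)
  then show False using t by simp
qed

end


theorem proposition3p1:
  fixes p M :: real
  assumes "p > 1" and "M > 0"
  shows "\<exists>\<xi>s > 0. \<forall>(N::nat) (c::complex) (\<Lambda>t::complex set).
           (open \<Lambda>t \<and>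
            bij_betw (Eiter N) \<Lambda>t (open_square c (pi / 2)) \<and>
            (\<forall>\<kappa>\<in>\<Lambda>t. norm (deriv (Eiter N) \<kappa>) > 2) \<and>
            (Eiter N -` open_square c (pi / 4)) \<inter> \<Lambda>t \<subseteq> ball 0 M)
           \<longrightarrow> (\<forall>\<xi>\<ge>\<xi>s. hausdorff_dim (I_pN p N \<xi> ((Eiter N -` open_square c (pi / 4)) \<inter> \<Lambda>t))
                            \<le> 1 + 1 / p)"
proof -
  have "\<forall>(N::nat) (c::complex) (\<Lambda>t::complex set).
           (open \<Lambda>t \<and>
            bij_betw (Eiter N) \<Lambda>t (open_square c (pi / 2)) \<and>
            (\<forall>\<kappa>\<in>\<Lambda>t. norm (deriv (Eiter N) \<kappa>) > 2) \<and>
            (Eiter N -` open_square c (pi / 4)) \<inter> \<Lambda>t \<subseteq> ball 0 M)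
           \<longrightarrow> (\<forall>\<xi>\<ge>4 * M + 20. hausdorff_dim (I_pN p N \<xi> ((Eiter N -` open_square c (pi / 4)) \<inter> \<Lambda>t))
                            \<le> 1 + 1 / p)"
  proof (intro allI impI)
    fix N c Lt \<xi>
    assume H: "open Lt \<and> bij_betw (Eiter N) Lt (open_square c (pi / 2)) \<and>
            (\<forall>\<kappa>\<in>Lt. norm (deriv (Eiter N) \<kappa>) > 2) \<and>
            (Eiter N -` open_square c (pi / 4)) \<inter> Lt \<subseteq> ball 0 M"
      and xi: "4 * M + 20 \<le> \<xi>"
    interpret psetup p M \<xi> N c Lt using assms H xi by unfold_locales auto
    have sub: "I_pN p N \<xi> ((Eiter N -` open_square c (pi / 4)) \<inter> Lt) \<subseteq> Y"
    proof
      fix k assume k: "k \<in> I_pN p N \<xi> ((Eiter N -` open_square c (pi / 4)) \<inter> Lt)"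
      then have "k \<in> Lam" "\<forall>n\<ge>N. Eiter n k \<in> Pset p \<xi>" by (auto simp: I_pN_def I_p_def Lam_def)
      then show "k \<in> Y" by (simp add: Y_def)
    qed
    show "hausdorff_dim (I_pN p N \<xi> ((Eiter N -` open_square c (pi / 4)) \<inter> Lt)) \<le> 1 + 1 / p"
      by (rule dim_bound[OF sub])
  qed
  moreover have "(4 * M + 20 :: real) > 0" using assms by simp
  ultimately show ?thesis by blast
qed

end
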